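(* Let $a,b\in\mathbb{N}$ with $2\leq b\leq a$ and let $x_1\geq x_2\geq\cdots\geq x_b\geq 0$ be reals. Then $$(a-b+1)\,a^{\log_b x_b}+\sum_{i=1}^{b-1}a^{\log_b x_i}\leq a^{\log_b\sum_{i=1}^{b}x_i}.$$
   Context: By convention $a^{\log_b 0}=0$, so $x_b$ (and any $x_i$) may be $0$. *)

theory Defs
  imports Complex_Main
begin

text \<open>The quantity a^(log_b x), with the paper's convention a^(log_b 0) = 0.\<close>
definition logpow :: "real \<Rightarrow> real \<Rightarrow> real \<Rightarrow> real" where
  "logpow a b x = (if x = 0 then 0 else a powr (log b x))"

end

theory Submission
  imports Defs "HOL-Analysis.Analysis"
begin

lemma powr_convex0:
  assumes p: "(p::real) \<ge> 1"
  shows "convex_on {0..} (\<lambda>x::real. x powr p)"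
proof (rule convex_on_linorderI)
  fix t x y :: real
  assume t: "0 < t" "t < 1" and xy: "x \<in> {0..}" "y \<in> {0..}" "x < y"
  show "((1 - t) *\<^sub>R x + t *\<^sub>R y) powr p \<le> (1 - t) * x powr p + t * y powr p"
  proof (cases "x = 0")
    case True
    have "(t * y) powr p = t powr p * y powr p"
      using t xy by (simp add: powr_mult)
    also have "\<dots> \<le> t * y powr p"
      using t p powr_le_one_le[of t p] by (intro mult_right_mono) auto
    finally show ?thesis using True by simp
  next
    case False
    then have "x \<in> {0<..}" "y \<in> {0<..}" using xy by auto
    from convex_onD[OF powr_convex[OF p], OF _ _ this] t show ?thesis by simp
  qed
qed (simp add: convex_real_interval)

lemma incr:
  fixes f :: "real \<Rightarrow> real"
  assumes cv: "convex_on {0..} f" and w: "0 \<le> w" "w \<le> u" and d: "0 \<le> d"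
  shows "f (w + d) + f u \<le> f w + f (u + d)"
proof (cases "u + d - w = 0")
  case True
  then have "d = 0" "u = w" using w d by auto
  then show ?thesis by simp
next
  case False
  define L where "L = u + d - w"
  have L: "L > 0" using False w d unfolding L_def by linarith
  define t1 where "t1 = d / L"
  define t2 where "t2 = (u - w) / L"
  have "t1 + t2 = (d + (u - w)) / L" by (simp add: t1_def t2_def add_divide_distrib)
  also have "d + (u - w) = L" by (simp add: L_def)
  finally have t12: "t1 + t2 = 1" using L by simp
  have n1: "0 \<le> t1" using L d unfolding t1_def by auto
  have n2: "0 \<le> t2" using L w unfolding t2_def by auto
  have t1: "0 \<le> t1" "t1 \<le> 1" using n1 n2 t12 by auto
  have t2: "0 \<le> t2" "t2 \<le> 1" using n1 n2 t12 by auto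
  have mem: "w \<in> {0..}" "u + d \<in> {0..}" using w d by auto
  have uL: "u + d = L + w" by (simp add: L_def)
  have tL1: "t1 * L = d" using L by (simp add: t1_def)
  have tL2: "t2 * L = u - w" using L by (simp add: t2_def)
  have e1: "(1 - t1) *\<^sub>R w + t1 *\<^sub>R (u + d) = w + d"
    using tL1 uL by (simp add: algebra_simps)
  have e2: "(1 - t2) *\<^sub>R w + t2 *\<^sub>R (u + d) = u"
    using tL2 uL by (simp add: algebra_simps)
  have "f (w + d) \<le> (1 - t1) * f w + t1 * f (u + d)"
    using convex_onD[OF cv t1 mem] e1 by simp
  moreover have "f u \<le> (1 - t2) * f w + t2 * f (u + d)"
    using convex_onD[OF cv t2 mem] e2 by simp
  moreover have t2e: "t2 = 1 - t1" using t12 by simp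
  moreover have "(1 - t1) * f w + t1 * f (u + d) + ((1 - t2) * f w + t2 * f (u + d)) = f w + f (u + d)"
    by (simp add: t2e algebra_simps)
  ultimately show ?thesis by linarith
qed

theorem lemma10:
  fixes a b :: nat and x :: "nat \<Rightarrow> real"
  assumes "2 \<le> b" and "b \<le> a"
    and "\<And>i j. 1 \<le> i \<Longrightarrow> i \<le> j \<Longrightarrow> j \<le> b \<Longrightarrow> x j \<le> x i"
    and "x b \<ge> 0"
  shows "(real a - real b + 1) * logpow (real a) (real b) (x b)
           + (\<Sum>i=1..b-1. logpow (real a) (real b) (x i))
         \<le> logpow (real a) (real b) (\<Sum>i=1..b. x i)"
proof -
  define p where "p = log (real b) (real a)"
  define f where "f = (\<lambda>t::real. t powr p)"
  have b1: "real b > 1" using assms by auto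
  have a1: "real a > 0" using assms by auto
  have p1: "p \<ge> 1" unfolding p_def using assms b1
    by (subst log_le_cancel_iff[symmetric, of "real b"]) auto
  have cv: "convex_on {0..} f" unfolding f_def using powr_convex0[OF p1] .
  have lp: "logpow (real a) (real b) t = f t" if "t \<ge> 0" for t
  proof (cases "t = 0")
    case True then show ?thesis by (simp add: logpow_def f_def)
  next
    case False
    then have "t > 0" using that by auto
    then show ?thesis using a1 b1 False
      by (simp add: logpow_def f_def p_def powr_def log_def)
  qed
  have xnn: "x i \<ge> 0" if "1 \<le> i" "i \<le> b" for i
    using assms(3)[OF that order_refl] assms(3)[of i b] that assms(4) by auto
  have xge: "x b \<le> x i" if "1 \<le> i" "i \<le> b" for i
    using assms(3)[of i b] that by auto
  define T where "T k = (\<Sum>i=1..k. x i) + real (b - k) * x b" for k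
  have fb: "f (real b * x b) = real a * f (x b)"
    using assms(4) b1 a1 unfolding f_def p_def
    by (simp add: powr_mult powr_log_cancel)
  have key: "k \<le> b - 1 \<Longrightarrow> real a * f (x b) + (\<Sum>i=1..k. f (x i) - f (x b)) \<le> f (T k)" for k
  proof (induction k)
    case 0
    then show ?case using fb by (simp add: T_def)
  next
    case (Suc k)
    have IH: "real a * f (x b) + (\<Sum>i=1..k. f (x i) - f (x b)) \<le> f (T k)"
      using Suc by auto
    have sn: "(\<Sum>i=1..k. x i) \<ge> 0" by (rule sum_nonneg) (use xnn Suc.prems in auto)
    have bk: "real (b - k) \<ge> 1" using Suc.prems by auto
    have "real (b - k) * x b \<ge> 1 * x b" using bk assms(4) by (intro mult_right_mono) auto
    then have Tk: "x b \<le> T k" unfolding T_def using sn by linarith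
    have d: "0 \<le> x (Suc k) - x b" using xge[of "Suc k"] Suc.prems by auto
    have inc: "f (x b + (x (Suc k) - x b)) + f (T k) \<le> f (x b) + f (T k + (x (Suc k) - x b))"
      by (rule incr[OF cv assms(4) Tk d])
    have TS: "T (Suc k) = T k + (x (Suc k) - x b)"
      unfolding T_def using Suc.prems by (simp add: of_nat_diff algebra_simps)
    show ?case using IH inc TS by simp
  qed
  have T: "T (b - 1) = (\<Sum>i=1..b. x i)"
  proof -
    have "{1..b} = insert b {1..b-1}" using assms by auto
    then have "(\<Sum>i=1..b. x i) = x b + (\<Sum>i=1..b-1. x i)" using assms by (simp add: sum.insert)
    moreover have "real (b - (b - 1)) = 1" using assms by simp
    ultimately show ?thesis unfolding T_def by simp
  qed
  have S0: "(\<Sum>i=1..b. x i) \<ge> 0" by (rule sum_nonneg) (use xnn in auto)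
  have L: "(\<Sum>i=1..b-1. logpow (real a) (real b) (x i)) = (\<Sum>i=1..b-1. f (x i))"
    by (rule sum.cong) (use lp xnn in auto)
  have sd: "(\<Sum>i=1..b-1. f (x i) - f (x b)) = (\<Sum>i=1..b-1. f (x i)) - real (b - 1) * f (x b)"
    by (simp add: sum_subtractf)
  have "real a * f (x b) + (\<Sum>i=1..b-1. f (x i) - f (x b)) \<le> f (\<Sum>i=1..b. x i)"
    using key[of "b - 1"] T by simp
  then show ?thesis
    using sd L lp[OF assms(4)] lp[OF S0] assms by (simp add: of_nat_diff algebra_simps)
qed

end
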